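(* For all real $x$ and every real $\kappa \geq 1$, \[ Q(x) \geq \left(\frac{e^{(\pi(\kappa-1)+2)^{-1}}}{2\kappa}\sqrt{\frac{1}{\pi}(\kappa-1)(\pi(\kappa-1)+2)}\,\right) e^{-\frac{\kappa x^2}{2}}. \]
   Context: $Q$ denotes the Gaussian $Q$-function, $Q(x) = \frac{1}{\sqrt{2\pi}}\int_x^\infty e^{-t^2/2}\,dt$ for $x\in\mathbb{R}$. *)

theory Defs
  imports "HOL-Analysis.Analysis"
begin

definition gaussQ :: "real \<Rightarrow> real" where
  "gaussQ x = (1 / sqrt (2 * pi)) * (LBINT t:{x..}. exp (- (t\<^sup>2) / 2))"

end

theory Submission imports Defs "HOL-Probability.Distributions" begin


lemma gauss_integrable: "integrable lborel (\<lambda>t::real. exp (- (t\<^sup>2) / 2))"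
proof -
  have "integrable lborel (\<lambda>t. sqrt (2*pi) * std_normal_density t)" by simp
  moreover have "(\<lambda>t. sqrt (2*pi) * std_normal_density t) = (\<lambda>t::real. exp (- (t\<^sup>2) / 2))"
    by (auto simp: std_normal_density_def)
  ultimately show ?thesis by simp
qed

lemma gauss_set_integrable: "A \<in> sets borel \<Longrightarrow> set_integrable lborel A (\<lambda>t::real. exp (- (t\<^sup>2) / 2))"
  unfolding set_integrable_def
  by (rule integrable_mult_indicator[OF _ gauss_integrable]) simp

lemma gaussQ_nonneg: "gaussQ x \<ge> 0"
  unfolding gaussQ_def set_lebesgue_integral_def
  by (auto intro!: integral_nonneg_AE mult_nonneg_nonneg simp: indicator_def)

lemma gaussQ_split:
  assumes "x \<le> b"
  shows "gaussQ x = (integral {x..b} (\<lambda>t. exp (- (t\<^sup>2) / 2)) + (LBINT t:{b<..}. exp (- (t\<^sup>2) / 2))) / sqrt (2*pi)"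
proof -
  have "{x..} = {x..b} \<union> {b<..}" using assms by auto
  moreover have "(LBINT t:{x..b} \<union> {b<..}. exp (- (t\<^sup>2) / 2)) = (LBINT t:{x..b}. exp (- (t\<^sup>2) / 2)) + (LBINT t:{b<..}. exp (- (t\<^sup>2) / 2))"
    by (rule set_integral_Un; (rule gauss_set_integrable)?; auto)
  ultimately have "(LBINT t:{x..}. exp (- (t\<^sup>2) / 2)) = (LBINT t:{x..b}. exp (- (t\<^sup>2) / 2)) + (LBINT t:{b<..}. exp (- (t\<^sup>2) / 2))"
    by simp
  moreover have "(LBINT t:{x..b}. exp (- (t\<^sup>2) / 2)) = integral {x..b} (\<lambda>t. exp (- (t\<^sup>2) / 2))"
    by (rule set_borel_integral_eq_integral(2)[OF gauss_set_integrable]) simp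
  ultimately show ?thesis unfolding gaussQ_def by simp
qed

lemma gaussQ_deriv: "(gaussQ has_real_derivative (- exp (- (x\<^sup>2) / 2) / sqrt (2*pi))) (at x)"
proof -
  define J where "J = (LBINT t:{x+1<..}. exp (- (t\<^sup>2) / 2))"
  have c: "continuous_on {x-1..x+1} (\<lambda>t::real. exp (- (t\<^sup>2) / 2))"
    by (intro continuous_intros) auto
  have "((\<lambda>y. integral {y..x+1} (\<lambda>t. exp (- (t\<^sup>2) / 2))) has_real_derivative - exp (- (x\<^sup>2) / 2)) (at x within {x-1..x+1})"
    using integral_has_real_derivative'[OF c, of x] by simp
  then have d1: "((\<lambda>y. integral {y..x+1} (\<lambda>t. exp (- (t\<^sup>2) / 2))) has_real_derivative - exp (- (x\<^sup>2) / 2)) (at x)"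
    by (simp add: at_within_Icc_at)
  have d2: "((\<lambda>y. (integral {y..x+1} (\<lambda>t. exp (- (t\<^sup>2) / 2)) + J) / sqrt (2*pi)) has_real_derivative (- exp (- (x\<^sup>2) / 2) / sqrt (2*pi))) (at x)"
    using DERIV_cdivide[OF DERIV_add[OF d1 DERIV_const[of J]], of "sqrt (2*pi)"] by simp
  show ?thesis
  proof (rule has_field_derivative_transform_within_open[OF d2, of "{x-1<..<x+1}"])
    fix y assume "y \<in> {x-1<..<x+1}"
    then show "(integral {y..x+1} (\<lambda>t. exp (- (t\<^sup>2) / 2)) + J) / sqrt (2*pi) = gaussQ y"
      using gaussQ_split[of y "x+1"] by (simp add: J_def)
  qed auto
qed

lemma gaussQ_0: "gaussQ 0 = 1/2"
proof -
  have h: "has_bochner_integral lborel (\<lambda>x. indicator {0..} x *\<^sub>R exp (- x\<^sup>2)) (sqrt pi / 2)"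
    by (rule gaussian_moment_0)
  have "(\<integral>x. indicator {0..} x *\<^sub>R exp (- x\<^sup>2) \<partial>lborel) = sqrt pi / 2"
    using h by (simp add: has_bochner_integral_iff)
  have "(LBINT t:{0..}. exp (- (t\<^sup>2) / 2)) = (\<integral>t. indicator {0..} t *\<^sub>R exp (- (t\<^sup>2) / 2) \<partial>lborel)"
    by (simp add: set_lebesgue_integral_def)
  also have "\<dots> = \<bar>sqrt 2\<bar> *\<^sub>R (\<integral>s. indicator {0..} (0 + sqrt 2 * s) *\<^sub>R exp (- ((0 + sqrt 2 * s)\<^sup>2) / 2) \<partial>lborel)"
    by (rule lborel_integral_real_affine[where t=0 and c="sqrt 2"]) simp
  also have "(\<lambda>s::real. indicator {0..} (0 + sqrt 2 * s) *\<^sub>R exp (- ((0 + sqrt 2 * s)\<^sup>2) / 2)) = (\<lambda>x. indicator {0..} x *\<^sub>R exp (- x\<^sup>2))"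
    by (auto simp: indicator_def power_mult_distrib zero_le_mult_iff)
  finally have "(LBINT t:{0..}. exp (- (t\<^sup>2) / 2)) = sqrt 2 * (sqrt pi / 2)"
    using h by (simp add: has_bochner_integral_iff)
  then show ?thesis unfolding gaussQ_def by (simp add: real_sqrt_mult)
qed




definition phi :: "real \<Rightarrow> real" where "phi x = exp (- (x\<^sup>2) / 2) / sqrt (2*pi)"
definition rr :: "real \<Rightarrow> real" where "rr x = sqrt (x\<^sup>2 + 2*pi)"
definition gg :: "real \<Rightarrow> real" where "gg x = (pi-1)*x + rr x"
definition gd :: "real \<Rightarrow> real" where "gd x = (pi-1) + x / rr x"
definition PP :: "real \<Rightarrow> real" where "PP x = pi * phi x / gg x"
definition NN :: "real \<Rightarrow> real" where "NN x = pi*x*gg x + pi*gd x - (gg x)\<^sup>2"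

lemma rr_pos: "rr x > 0" unfolding rr_def by (intro real_sqrt_gt_zero) (simp add: add_nonneg_pos)
lemma rr_sq: "(rr x)\<^sup>2 = x\<^sup>2 + 2*pi" unfolding rr_def by (simp add: add_nonneg_nonneg)
lemma rr_gt: "rr x > x"
proof -
  have "x\<^sup>2 < (rr x)\<^sup>2" using rr_sq[of x] by simp
  then show ?thesis using power_less_imp_less_base[of x 2 "rr x"] rr_pos[of x] by linarith
qed
lemma gg_pos: "x \<ge> 0 \<Longrightarrow> gg x > 0"
  unfolding gg_def using rr_pos[of x] pi_gt3 by (simp add: add_nonneg_pos)
lemma phi_pos: "phi x > 0" unfolding phi_def by simp

lemma phi_deriv: "(phi has_real_derivative (- x * phi x)) (at x)"
  unfolding phi_def[abs_def]
  by (auto intro!: derivative_eq_intros simp: field_simps power2_eq_square)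

lemma rr_deriv: "(rr has_real_derivative (x / rr x)) (at x)"
proof -
  have "((\<lambda>x. sqrt (x\<^sup>2 + 2*pi)) has_real_derivative (inverse (sqrt (x\<^sup>2 + 2*pi)) / 2 * (2*x))) (at x)"
    using add_nonneg_pos[OF zero_le_power2[of x], of "2*pi"]
    by (auto intro!: derivative_eq_intros)
  then show ?thesis unfolding rr_def[abs_def] by (simp add: field_simps)
qed

lemma gg_deriv: "(gg has_real_derivative gd x) (at x)"
  unfolding gg_def[abs_def] gd_def
  using DERIV_add[OF DERIV_cmult[OF DERIV_ident, of "pi-1"] rr_deriv[of x]] by simp

lemma F_deriv:
  assumes "x \<ge> 0"
  shows "((\<lambda>x. gaussQ x - PP x) has_real_derivative (phi x * NN x / (gg x)\<^sup>2)) (at x)"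
proof -
  have g: "gg x \<noteq> 0" using gg_pos[OF assms] by simp
  have "((\<lambda>x. pi * phi x / gg x) has_real_derivative ((pi * (- x * phi x)) * gg x - (pi * phi x) * gd x) / (gg x)\<^sup>2) (at x)"
    using DERIV_quotient[OF DERIV_cmult[OF phi_deriv] gg_deriv g, of pi] by (simp add: mult.commute power2_eq_square)
  then have "((\<lambda>x. gaussQ x - PP x) has_real_derivative (- phi x - ((pi * (- x * phi x)) * gg x - (pi * phi x) * gd x) / (gg x)\<^sup>2)) (at x)"
    unfolding PP_def[abs_def]
    using DERIV_diff[OF gaussQ_deriv[of x]] by (simp add: phi_def)
  moreover have "- phi x - ((pi * (- x * phi x)) * gg x - (pi * phi x) * gd x) / (gg x)\<^sup>2 = phi x * NN x / (gg x)\<^sup>2"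
    using g by (simp add: NN_def field_simps power2_eq_square)
  ultimately show ?thesis by simp
qed

lemma NN_identity: "NN x * rr x * (rr x + x) = pi * (rr x - x) * ((pi - 3) * rr x - x)"
proof -
  have r: "rr x \<noteq> 0" using rr_pos[of x] by simp
  have s: "(rr x)\<^sup>2 = x\<^sup>2 + 2*pi" by (rule rr_sq)
  define r where "r = rr x"
  have "NN x * r = pi*x*((pi-1)*x + r)*r + pi*((pi-1)*r + x) - ((pi-1)*x + r)\<^sup>2 * r"
    using r unfolding NN_def gg_def gd_def r_def by (simp add: field_simps)
  moreover have "(pi*x*((pi-1)*x + r)*r + pi*((pi-1)*r + x) - ((pi-1)*x + r)\<^sup>2 * r) * (r + x) = pi * (r - x) * ((pi - 3) * r - x)"
    using s unfolding r_def[symmetric] by algebra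
  ultimately show ?thesis unfolding r_def by simp
qed




lemma NN_sign:
  assumes "y \<ge> 0"
  shows "y \<le> (pi-3) * rr y \<Longrightarrow> NN y \<ge> 0" and "\<not> y \<le> (pi-3) * rr y \<Longrightarrow> NN y \<le> 0"
proof -
  have p: "rr y * (rr y + y) > 0" using rr_pos[of y] assms by simp
  have q: "rr y - y > 0" using rr_gt[of y] by simp
  have e: "NN y * (rr y * (rr y + y)) = pi * (rr y - y) * ((pi - 3) * rr y - y)"
    using NN_identity[of y] by (simp add: mult.assoc)
  show "y \<le> (pi-3) * rr y \<Longrightarrow> NN y \<ge> 0"
  proof -
    assume "y \<le> (pi-3) * rr y"
    then have "pi * (rr y - y) * ((pi - 3) * rr y - y) \<ge> 0" using q by simp
    then show ?thesis using e p by (metis zero_le_mult_iff not_less)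
  qed
  show "\<not> y \<le> (pi-3) * rr y \<Longrightarrow> NN y \<le> 0"
  proof -
    assume "\<not> y \<le> (pi-3) * rr y"
    then have "pi * (rr y - y) * ((pi - 3) * rr y - y) \<le> 0" using q
      by (simp add: mult_nonneg_nonpos)
    then show ?thesis using e p by (metis mult_le_0_iff not_less)
  qed
qed

lemma C_iff:
  assumes "y \<ge> 0"
  shows "y \<le> (pi-3) * rr y \<longleftrightarrow> y\<^sup>2 * (1 - (pi-3)\<^sup>2) \<le> 2*pi*(pi-3)\<^sup>2"
proof -
  have nn: "(pi-3) * rr y \<ge> 0" using pi_gt3 rr_pos[of y] by simp
  have "y \<le> (pi-3) * rr y \<longleftrightarrow> y\<^sup>2 \<le> ((pi-3) * rr y)\<^sup>2"
    using assms nn by (meson power2_le_imp_le power_mono)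
  also have "((pi-3) * rr y)\<^sup>2 = (pi-3)\<^sup>2 * (y\<^sup>2 + 2*pi)"
    by (simp add: power_mult_distrib rr_sq)
  finally show ?thesis by (simp add: algebra_simps)
qed

lemma C_mono:
  assumes "0 \<le> y" "y \<le> z" "z \<le> (pi-3) * rr z"
  shows "y \<le> (pi-3) * rr y"
proof -
  have a: "1 - (pi-3)\<^sup>2 > 0"
  proof -
    have "(pi-3)\<^sup>2 < 1^2" using pi_gt3 pi_less_4 by (intro power_strict_mono) auto
    then show ?thesis by simp
  qed
  have "y\<^sup>2 \<le> z\<^sup>2" using assms by (intro power_mono) auto
  then have "y\<^sup>2 * (1 - (pi-3)\<^sup>2) \<le> z\<^sup>2 * (1 - (pi-3)\<^sup>2)" using a by (intro mult_right_mono) auto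
  also have "\<dots> \<le> 2*pi*(pi-3)\<^sup>2" using C_iff[of z] assms by simp
  finally show ?thesis using C_iff[of y] assms by simp
qed

lemma PP_0: "PP 0 = 1/2"
  unfolding PP_def phi_def gg_def rr_def by (simp add: real_sqrt_mult field_simps)

lemma PP_bound:
  assumes "y \<ge> 0"
  shows "PP y \<le> exp (- (y\<^sup>2) / 2) / 2"
proof -
  have "sqrt (2*pi) \<le> rr y" unfolding rr_def by simp
  also have "rr y \<le> gg y" unfolding gg_def using assms pi_gt3 by simp
  finally have g: "sqrt (2*pi) \<le> gg y" .
  have "PP y = pi * exp (- (y\<^sup>2) / 2) / (sqrt (2*pi) * gg y)" unfolding PP_def phi_def by simp
  also have "\<dots> \<le> pi * exp (- (y\<^sup>2) / 2) / (sqrt (2*pi) * sqrt (2*pi))"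
    using g gg_pos[OF assms] by (intro divide_left_mono mult_left_mono) auto
  also have "\<dots> = exp (- (y\<^sup>2) / 2) / 2" by simp
  finally show ?thesis .
qed

lemma exp_small:
  assumes "(e::real) > 0" "y \<ge> 1/e + 1"
  shows "exp (- (y\<^sup>2) / 2) / 2 < e"
proof -
  have y1: "y \<ge> 1" using assms by (smt (verit) divide_pos_pos zero_less_one)
  have "y\<^sup>2 \<ge> y" using y1 by (simp add: power2_eq_square)
  have "1 + y\<^sup>2/2 \<le> exp (y\<^sup>2/2)" by (rule exp_ge_add_one_self)
  have "exp (- (y\<^sup>2) / 2) = 1 / exp (y\<^sup>2/2)" by (simp add: exp_minus inverse_eq_divide)
  also have "\<dots> \<le> 1 / (1 + y\<^sup>2/2)"
    by (rule divide_left_mono) (use \<open>1 + y\<^sup>2/2 \<le> exp (y\<^sup>2/2)\<close> in \<open>auto intro!: mult_pos_pos add_pos_nonneg\<close>)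
  also have "1 / (1 + y\<^sup>2/2) < 2 * e"
  proof -
    have "1/e < y" using assms by simp
    then have "1 < y * e" using assms by (simp add: field_simps)
    moreover have "y * e \<le> y\<^sup>2 * e" using \<open>y\<^sup>2 \<ge> y\<close> assms by (intro mult_right_mono) auto
    moreover have "(1 + y\<^sup>2/2) * (2*e) = 2*e + y\<^sup>2*e" by (simp add: algebra_simps)
    ultimately have "1 < (1 + y\<^sup>2/2) * (2*e)" using assms by (simp only: mult.commute)
    moreover have a: "0 < 1 + y\<^sup>2/2" by (simp add: add_pos_nonneg)
    ultimately show ?thesis by (subst pos_divide_less_eq[OF a]) (simp add: mult.commute)
  qed
  finally show ?thesis by simp
qed

lemma mills:
  assumes "x \<ge> 0"
  shows "gaussQ x \<ge> PP x"
proof (cases "x \<le> (pi-3) * rr x")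
  case True
  have "gaussQ 0 - PP 0 \<le> gaussQ x - PP x"
  proof (rule deriv_nonneg_imp_mono[where g = "\<lambda>x. gaussQ x - PP x"])
    fix t assume t: "t \<in> {0..x}"
    show "((\<lambda>x. gaussQ x - PP x) has_real_derivative (phi t * NN t / (gg t)\<^sup>2)) (at t)"
      using F_deriv t by simp
    have "NN t \<ge> 0" using NN_sign(1)[of t] C_mono[of t x] True t by auto
    then show "phi t * NN t / (gg t)\<^sup>2 \<ge> 0" using phi_pos[of t] by simp
  qed (use assms in auto)
  then show ?thesis by (simp add: gaussQ_0 PP_0)
next
  case False
  have dec: "gaussQ y - PP y \<le> gaussQ x - PP x" if "y \<ge> x" for y
  proof (rule deriv_nonpos_imp_antimono[where g = "\<lambda>x. gaussQ x - PP x"])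
    fix t assume t: "t \<in> {x..y}"
    show "((\<lambda>x. gaussQ x - PP x) has_real_derivative (phi t * NN t / (gg t)\<^sup>2)) (at t)"
      using F_deriv t assms by simp
    have "\<not> t \<le> (pi-3) * rr t" using C_mono[of x t] False t assms by auto
    then have "NN t \<le> 0" using NN_sign(2)[of t] t assms by auto
    then show "phi t * NN t / (gg t)\<^sup>2 \<le> 0" using phi_pos[of t]
      by (simp add: divide_nonpos_nonneg mult_nonneg_nonpos)
  qed (use that in auto)
  show ?thesis
  proof (rule ccontr)
    assume na: "\<not> ?thesis"
    define e where "e = PP x - gaussQ x"
    have e: "e > 0" using na by (simp add: e_def)
    define y where "y = x + 1/e + 1"
    have y: "y \<ge> x" "y \<ge> 1/e + 1" "y \<ge> 0" using e assms by (auto simp: y_def)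
    have "PP y < e" using PP_bound[OF y(3)] exp_small[OF e y(2)] by simp
    moreover have "gaussQ y \<ge> 0" by (rule gaussQ_nonneg)
    moreover have "gaussQ y - PP y \<le> gaussQ x - PP x" using dec y by simp
    ultimately show False by (simp add: e_def)
  qed
qed




definition xsd :: "real \<Rightarrow> real" where "xsd k = sqrt (2 / ((k-1)*(pi*(k-1)+2)))"
definition DD :: "real \<Rightarrow> real \<Rightarrow> real" where "DD k x = gaussQ x * exp (k * x\<^sup>2 / 2)"
definition mm :: "real \<Rightarrow> real \<Rightarrow> real" where "mm k z = phi z * exp (k * z\<^sup>2 / 2) / (k * z)"

lemma xsd_pos: "k > 1 \<Longrightarrow> xsd k > 0"
  unfolding xsd_def by (intro real_sqrt_gt_zero divide_pos_pos mult_pos_pos) (auto intro: add_pos_pos)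

lemma xsd_sq: "k > 1 \<Longrightarrow> (xsd k)\<^sup>2 = 2 / ((k-1)*(pi*(k-1)+2))"
  unfolding xsd_def by (intro real_sqrt_pow2 divide_nonneg_pos mult_pos_pos) (auto intro: add_pos_pos)

lemma half2: "(2/(B::real))/2 = 1/B" by simp

lemma cancel2: "(u::real) \<noteq> 0 \<Longrightarrow> u * (2/(u*B)) = 2/B" by simp

lemma u_xs_sq: "k > 1 \<Longrightarrow> (k-1) * (xsd k)\<^sup>2 = 2 / (pi*(k-1)+2)"
  using xsd_sq[of k] cancel2[of "k-1" "pi*(k-1)+2"] by simp

lemma phi_exp: "phi z * exp (k * z\<^sup>2 / 2) = exp ((k-1) * z\<^sup>2 / 2) / sqrt (2*pi)"
proof -
  have "exp (- (z\<^sup>2) / 2) * exp (k * z\<^sup>2 / 2) = exp ((k-1) * z\<^sup>2 / 2)"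
    by (simp add: exp_add[symmetric] algebra_simps diff_divide_distrib)
  then show ?thesis unfolding phi_def by simp
qed

lemma c_eq:
  assumes "k > 1"
  shows "exp (1 / (pi * (k - 1) + 2)) / (2 * k) * sqrt ((1 / pi) * (k - 1) * (pi * (k - 1) + 2)) = mm k (xsd k)"
proof -
  define A where "A = (k-1)*(pi*(k-1)+2)"
  have A: "A > 0" unfolding A_def using assms by (intro mult_pos_pos add_pos_pos) auto
  have x: "xsd k > 0" using xsd_pos[OF assms] .
  have e: "(k-1) * (xsd k)\<^sup>2 / 2 = 1 / (pi * (k - 1) + 2)"
  proof -
    have "(k-1) * (xsd k)\<^sup>2 / 2 = (2 / (pi * (k - 1) + 2)) / 2" using u_xs_sq[OF assms] by simp
    also have "\<dots> = 1 / (pi * (k - 1) + 2)" by (rule half2)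
    finally show ?thesis .
  qed
  have s1: "(1/pi)*(k-1)*(pi*(k-1)+2) = A/pi" unfolding A_def by simp
  have xsA: "xsd k = sqrt (2/A)" unfolding xsd_def A_def by simp
  have "sqrt (2*pi) * xsd k * sqrt ((1 / pi) * (k - 1) * (pi * (k - 1) + 2)) = sqrt (2*pi * (2/A) * (A/pi))"
    unfolding s1 xsA by (simp only: real_sqrt_mult)
  also have "2*pi * (2/A) * (A/pi) = 4" using A by (simp add: field_simps)
  finally have s: "sqrt (2*pi) * xsd k * sqrt ((1 / pi) * (k - 1) * (pi * (k - 1) + 2)) = 2"
    by simp
  have "mm k (xsd k) = exp (1 / (pi * (k - 1) + 2)) / (sqrt (2*pi) * k * xsd k)"
    unfolding mm_def phi_exp e by simp
  also have "\<dots> = exp (1 / (pi * (k - 1) + 2)) / (2 * k) * sqrt ((1 / pi) * (k - 1) * (pi * (k - 1) + 2))"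
    using s x assms by (simp add: field_simps)
  finally show ?thesis by simp
qed

lemma mm_mono:
  assumes "k > 1" "0 < z" "z \<le> xsd k"
  shows "mm k z \<ge> mm k (xsd k)"
proof -
  define u where "u = k - 1"
  define xs where "xs = xsd k"
  have u: "u > 0" using assms by (simp add: u_def)
  have xs: "xs > 0" using xsd_pos[OF assms(1)] by (simp add: xs_def)
  have uxs: "u * xs\<^sup>2 \<le> 1"
  proof -
    have "u * xs\<^sup>2 = 2 / (pi * u + 2)" using u_xs_sq[OF assms(1)] by (simp add: xs_def u_def mult.commute)
    also have "\<dots> \<le> 1"
    proof -
      have "2 \<le> pi * u + 2" using u by simp
      then show ?thesis by (simp add: divide_le_eq_1)
    qed
    finally show ?thesis .
  qed
  have zx: "z \<le> xs" using assms by (simp add: xs_def)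
  define t where "t = u * (xs\<^sup>2 - z\<^sup>2) / 2"
  have t1: "t \<le> 1 - z / xs"
  proof -
    have "u * xs \<le> 1 / xs" using uxs xs by (simp add: field_simps power2_eq_square)
    moreover have "u * (xs + z) \<le> u * (2 * xs)" using zx u by (intro mult_left_mono) auto
    ultimately have "u * (xs + z) / 2 \<le> 1 / xs" by simp
    then have "(xs - z) * (u * (xs + z) / 2) \<le> (xs - z) * (1 / xs)" using zx by (intro mult_left_mono) auto
    then show ?thesis unfolding t_def using xs by (simp add: field_simps power2_eq_square)
  qed
  have t2: "1 - z / xs \<le> ln (xs / z)"
  proof -
    have "ln (z / xs) \<le> z / xs - 1" using assms xs by (intro ln_le_minus_one) auto
    moreover have "ln (xs / z) = - ln (z / xs)" using assms xs by (simp add: ln_div)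
    ultimately show ?thesis by simp
  qed
  have "exp t \<le> xs / z"
  proof -
    have "exp t \<le> exp (ln (xs / z))" using t1 t2 by simp
    also have "\<dots> = xs / z" using assms xs by simp
    finally show ?thesis .
  qed
  moreover have "exp (u * xs\<^sup>2 / 2) = exp (u * z\<^sup>2 / 2) * exp t"
    unfolding t_def by (simp add: exp_add[symmetric] algebra_simps diff_divide_distrib)
  ultimately have "exp (u * xs\<^sup>2 / 2) \<le> exp (u * z\<^sup>2 / 2) * (xs / z)"
    by (metis exp_gt_zero less_eq_real_def mult_left_mono)
  then have "exp (u * xs\<^sup>2 / 2) / xs \<le> exp (u * z\<^sup>2 / 2) / z"
    using xs assms by (simp add: field_simps)
  then have "exp (u * xs\<^sup>2 / 2) / xs / (sqrt (2*pi) * k) \<le> exp (u * z\<^sup>2 / 2) / z / (sqrt (2*pi) * k)"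
    using assms by (intro divide_right_mono) auto
  then show ?thesis unfolding mm_def phi_exp u_def xs_def by (simp add: field_simps)
qed




lemma DD_deriv: "(DD k has_real_derivative ((k * x * gaussQ x - phi x) * exp (k * x\<^sup>2 / 2))) (at x)"
proof -
  have "((\<lambda>x. exp (k * x\<^sup>2 / 2)) has_real_derivative (exp (k * x\<^sup>2 / 2) * (k * x))) (at x)"
    by (auto intro!: derivative_eq_intros simp: power2_eq_square)
  from DERIV_mult[OF gaussQ_deriv[of x] this] show ?thesis
    unfolding DD_def[abs_def] phi_def by (simp add: algebra_simps)
qed

lemma DD_cont: "continuous_on S (DD k)"
  using DD_deriv by (meson DERIV_isCont continuous_at_imp_continuous_on)

lemma DD_ge_mm:
  assumes "k > 0" "z > 0" "k * z * gaussQ z \<ge> phi z"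
  shows "DD k z \<ge> mm k z"
proof -
  have "gaussQ z \<ge> phi z / (k * z)" using assms by (simp add: field_simps)
  then have "gaussQ z * exp (k * z\<^sup>2 / 2) \<ge> phi z / (k * z) * exp (k * z\<^sup>2 / 2)"
    by (intro mult_right_mono) auto
  then show ?thesis unfolding DD_def mm_def by (simp add: field_simps)
qed

lemma cancel3: "(a::real) \<noteq> 0 \<Longrightarrow> a * (2/a) = 2" by simp

lemma big_x:
  assumes "k > 1" "x \<ge> xsd k"
  shows "k * x * gaussQ x \<ge> phi x"
proof -
  define u where "u = k - 1"
  have u: "u > 0" using assms by (simp add: u_def)
  have xs: "xsd k > 0" using xsd_pos[OF assms(1)] .
  have x0: "x > 0" using xs assms by simp
  have "x\<^sup>2 \<ge> (xsd k)\<^sup>2" using assms xs by (intro power_mono) auto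
  moreover have A: "u*(pi*u+2) > 0" using u by (simp add: add_pos_pos)
  ultimately have "u*(pi*u+2)*x\<^sup>2 \<ge> u*(pi*u+2)*(xsd k)\<^sup>2" by (intro mult_left_mono) auto
  moreover have "(xsd k)\<^sup>2 = 2/(u*(pi*u+2))" using xsd_sq[OF assms(1)] by (simp add: u_def)
  moreover have "u*(pi*u+2)*(2/(u*(pi*u+2))) = 2" by (rule cancel3) (use A in linarith)
  ultimately have x2: "u * (pi*u+2) * x\<^sup>2 \<ge> 2" by simp
  have "x\<^sup>2 + 2*pi \<le> ((pi*u+1)*x)\<^sup>2"
  proof -
    have "((pi*u+1)*x)\<^sup>2 = x\<^sup>2 + pi * (u*(pi*u+2)*x\<^sup>2)" by (simp add: power2_eq_square algebra_simps)
    moreover have "pi * (u*(pi*u+2)*x\<^sup>2) \<ge> pi * 2" using x2 by (intro mult_left_mono) auto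
    ultimately show ?thesis by simp
  qed
  then have "sqrt (x\<^sup>2 + 2*pi) \<le> sqrt (((pi*u+1)*x)\<^sup>2)" by (rule real_sqrt_le_mono)
  also have "sqrt (((pi*u+1)*x)\<^sup>2) = (pi*u+1)*x" using x0 u by simp
  finally have "rr x \<le> (pi*u+1)*x" unfolding rr_def .
  then have gle: "gg x \<le> pi * k * x" unfolding gg_def u_def by (simp add: algebra_simps)
  have gp: "gg x > 0" using gg_pos x0 by simp
  have "gaussQ x \<ge> pi * phi x / gg x" using mills[of x] x0 unfolding PP_def by simp
  moreover have "pi * phi x / gg x \<ge> pi * phi x / (pi * k * x)"
    using gle gp phi_pos[of x] by (intro divide_left_mono) auto
  moreover have "pi * phi x / (pi * k * x) = phi x / (k * x)" by simp
  ultimately have "gaussQ x \<ge> phi x / (k * x)" by simp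
  then show ?thesis using x0 assms by (simp add: field_simps)
qed

lemma main_pos:
  assumes "k > 1"
  shows "DD k x \<ge> mm k (xsd k)"
proof -
  define xs where "xs = xsd k"
  have xs: "xs > 0" using xsd_pos[OF assms] by (simp add: xs_def)
  have at_xs: "DD k xs \<ge> mm k xs"
    using DD_ge_mm[of k xs] big_x[of k xs] assms xs by (simp add: xs_def)
  have inner: "DD k z \<ge> mm k xs" if "z \<in> {0..xs}" for z
  proof -
    obtain z0 where z0: "z0 \<in> {0..xs}" and mn: "\<forall>y\<in>{0..xs}. DD k z0 \<le> DD k y"
      using continuous_attains_inf[of "{0..xs}" "DD k"] xs DD_cont by auto
    have "DD k z0 \<ge> mm k xs"
    proof (cases "z0 = xs")
      case True then show ?thesis using at_xs by simp
    next
      case False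
      show ?thesis
      proof (cases "z0 = 0")
        case True
        have "(k * 0 * gaussQ 0 - phi 0) * exp (k * 0\<^sup>2 / 2) < 0" using phi_pos[of 0] by simp
        then obtain d where d: "d > 0" "\<forall>h>0. h < d \<longrightarrow> DD k 0 > DD k (0 + h)"
          using DERIV_neg_dec_right[OF DD_deriv[of k 0]] by blast
        define h where "h = min (d/2) xs"
        have "h > 0" "h < d" "h \<in> {0..xs}" using d xs by (auto simp: h_def)
        then have "DD k 0 > DD k h" "DD k z0 \<le> DD k h" using d mn by auto
        then show ?thesis using True by simp
      next
        case False
        have zz: "0 < z0" "z0 < xs" using z0 False \<open>z0 \<noteq> xs\<close> by auto
        define d where "d = min z0 (xs - z0)"
        have "d > 0" using zz by (simp add: d_def)
        moreover have "\<forall>y. \<bar>z0 - y\<bar> < d \<longrightarrow> DD k z0 \<le> DD k y"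
          using mn zz by (auto simp: d_def abs_less_iff)
        ultimately have "(k * z0 * gaussQ z0 - phi z0) * exp (k * z0\<^sup>2 / 2) = 0"
          using DERIV_local_min[OF DD_deriv[of k z0]] by blast
        then have "k * z0 * gaussQ z0 = phi z0" by simp
        then have "DD k z0 \<ge> mm k z0" using DD_ge_mm[of k z0] assms zz by simp
        moreover have "mm k z0 \<ge> mm k xs" using mm_mono[of k z0] assms zz by (simp add: xs_def)
        ultimately show ?thesis by simp
      qed
    qed
    then show ?thesis using mn that by force
  qed
  show ?thesis
  proof (cases "x < 0")
    case True
    have "DD k 0 \<le> DD k x"
    proof (rule deriv_nonpos_imp_antimono[where g = "DD k"])
      fix t assume t: "t \<in> {x..0}"
      show "(DD k has_real_derivative ((k * t * gaussQ t - phi t) * exp (k * t\<^sup>2 / 2))) (at t)"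
        by (rule DD_deriv)
      have "k * t * gaussQ t \<le> 0" using t assms gaussQ_nonneg[of t]
          mult_nonpos_nonneg[of "k*t" "gaussQ t"] mult_nonneg_nonpos[of k t] by simp
      then show "(k * t * gaussQ t - phi t) * exp (k * t\<^sup>2 / 2) \<le> 0"
        using phi_pos[of t] by (simp add: mult_nonpos_nonneg)
    qed (use True in auto)
    then show ?thesis using inner[of 0] xs unfolding xs_def by simp
  next
    case False
    show ?thesis
    proof (cases "x \<le> xs")
      case True then show ?thesis using inner[of x] False unfolding xs_def by simp
    next
      case False
      have "DD k xs \<le> DD k x"
      proof (rule deriv_nonneg_imp_mono[where g = "DD k"])
        fix t assume t: "t \<in> {xs..x}"
        show "(DD k has_real_derivative ((k * t * gaussQ t - phi t) * exp (k * t\<^sup>2 / 2))) (at t)"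
          by (rule DD_deriv)
        have "k * t * gaussQ t \<ge> phi t" using big_x[of k t] t assms by (simp add: xs_def)
        then show "(k * t * gaussQ t - phi t) * exp (k * t\<^sup>2 / 2) \<ge> 0" by simp
      qed (use False in auto)
      then show ?thesis using at_xs unfolding xs_def by simp
    qed
  qed
qed

theorem theorem1:
  fixes x \<kappa> :: real
  assumes "\<kappa> \<ge> 1"
  shows "gaussQ x \<ge>
    (exp (1 / (pi * (\<kappa> - 1) + 2)) / (2 * \<kappa>)
      * sqrt ((1 / pi) * (\<kappa> - 1) * (pi * (\<kappa> - 1) + 2)))
    * exp (- (\<kappa> * x\<^sup>2) / 2)"
proof (cases "\<kappa> = 1")
  case True then show ?thesis using gaussQ_nonneg[of x] by simp
next
  case False
  then have k: "\<kappa> > 1" using assms by simp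
  have "DD \<kappa> x \<ge> (exp (1 / (pi * (\<kappa> - 1) + 2)) / (2 * \<kappa>)
      * sqrt ((1 / pi) * (\<kappa> - 1) * (pi * (\<kappa> - 1) + 2)))"
    using main_pos[OF k, of x] c_eq[OF k] by simp
  then have "DD \<kappa> x * exp (- (\<kappa> * x\<^sup>2) / 2) \<ge> (exp (1 / (pi * (\<kappa> - 1) + 2)) / (2 * \<kappa>)
      * sqrt ((1 / pi) * (\<kappa> - 1) * (pi * (\<kappa> - 1) + 2))) * exp (- (\<kappa> * x\<^sup>2) / 2)"
    by (intro mult_right_mono) auto
  moreover have "DD \<kappa> x * exp (- (\<kappa> * x\<^sup>2) / 2) = gaussQ x"
    unfolding DD_def by (simp add: mult.assoc exp_add[symmetric])
  ultimately show ?thesis by simp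
qed


end
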